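(* Let $k\ge 0$ and $K=2k^3$. Let $\mathcal I$ be an interpretation coloured by $\kappa$ that is $K$-sparse, and let $\mathcal Q$ be a finite interpretation with $|\Delta^{\mathcal Q}|\le k$. Then $\mathcal Q$ maps homomorphically into $\mathcal I$ if and only if $\mathcal Q$ maps homomorphically into the quotient $\mathcal I/{\sim_K}$.
   Context: Homomorphisms are maps between domains preserving membership in every concept name and every role name. Distance: view $\mathcal I$ as an undirected graph with an edge between $x,y$ whenever $(x,y)$ or $(y,x)\in r^{\mathcal I}$ for some role name $r$; $d_{\mathcal I}(x,y)$ is the length of a shortest undirected path ($\infty$ if none). $N_k(x)=\{y: d_{\mathcal I}(x,y)\le k\}$, and $\mathcal I\upharpoonright N_k(x)$ is the induced subinterpretation (domain $N_k(x)$, concepts and roles restricted). A coloured interpretation is $\mathcal I$ with a partial map $\kappa\colon\mathrm{dom}(\kappa)\to C$, $\mathrm{dom}(\kappa)\subseteq\Delta^{\mathcal I}$, $C$ a set of colours; subinterpretations are coloured by the restriction of $\kappa$. A homomorphism $h$ from $\mathcal I$ (coloured by $\kappa$) to $\mathcal J$ (coloured by $\theta$) preserves colours if for all $x$: $x\in\mathrm{dom}(\kappa)\iff h(x)\in\mathrm{dom}(\theta)$, and then $\kappa(x)=\theta(h(x))$. $x\sim_k y$ iff $x=y$, or $x,y\in\mathrm{dom}(\kappa)$, $\kappa(x)=\kappa(y)$, and there are colour-preserving homomorphisms $\mathcal I\upharpoonright N_k(x)\to\mathcal I\upharpoonright N_k(y)$ mapping $x$ to $y$ and $\mathcal I\upharpoonright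 N_k(y)\to\mathcal I\upharpoonright N_k(x)$ mapping $y$ to $x$. $\mathcal I$ is $k$-sparse if for every $x$ and distinct $y,y'\in N_k(x)\cap\mathrm{dom}(\kappa)$ we have $\kappa(y)\ne\kappa(y')$. For an equivalence relation $\sim$ on $\Delta^{\mathcal I}$, the quotient $\mathcal I/{\sim}$ has domain the classes $[x]_\sim$, $A^{\mathcal I/\sim}=\{[x]_\sim: x\in A^{\mathcal I}\}$ and $r^{\mathcal I/\sim}=\{([x]_\sim,[y]_\sim):(x,y)\in r^{\mathcal I}\}$. *)

theory Defs
  imports Main
begin

record ('d, 'c, 'r) interp =
  dm :: "'d set"
  cn :: "'c \<Rightarrow> 'd set"
  rl :: "'r \<Rightarrow> ('d \<times> 'd) set"

definition wf_interp :: "('d, 'c, 'r) interp \<Rightarrow> bool" where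
  "wf_interp I \<longleftrightarrow> (\<forall>A. cn I A \<subseteq> dm I) \<and> (\<forall>r. rl I r \<subseteq> dm I \<times> dm I)"

definition is_hom :: "('d, 'c, 'r) interp \<Rightarrow> ('e, 'c, 'r) interp \<Rightarrow> ('d \<Rightarrow> 'e) \<Rightarrow> bool" where
  "is_hom I J h \<longleftrightarrow> h ` dm I \<subseteq> dm J
     \<and> (\<forall>A x. x \<in> cn I A \<longrightarrow> h x \<in> cn J A)
     \<and> (\<forall>r x y. (x, y) \<in> rl I r \<longrightarrow> (h x, h y) \<in> rl J r)"

definition gedge :: "('d, 'c, 'r) interp \<Rightarrow> ('d \<times> 'd) set" where
  "gedge I = {(x, y). \<exists>r. (x, y) \<in> rl I r \<or> (y, x) \<in> rl I r}"

definition nbhd :: "('d, 'c, 'r) interp \<Rightarrow> nat \<Rightarrow> 'd \<Rightarrow> 'd set" where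
  "nbhd I k x = {y \<in> dm I. \<exists>n\<le>k. (x, y) \<in> gedge I ^^ n}"

definition restr :: "('d, 'c, 'r) interp \<Rightarrow> 'd set \<Rightarrow> ('d, 'c, 'r) interp" where
  "restr I S = \<lparr> dm = dm I \<inter> S, cn = (\<lambda>A. cn I A \<inter> S), rl = (\<lambda>r. rl I r \<inter> (S \<times> S)) \<rparr>"

definition is_col_hom :: "('d, 'c, 'r) interp \<Rightarrow> ('d \<rightharpoonup> 'col) \<Rightarrow>
    ('e, 'c, 'r) interp \<Rightarrow> ('e \<rightharpoonup> 'col) \<Rightarrow> ('d \<Rightarrow> 'e) \<Rightarrow> bool" where
  "is_col_hom I \<kappa> J \<theta> h \<longleftrightarrow> is_hom I J h \<and>
     (\<forall>x \<in> dm I. (x \<in> dom \<kappa> \<longleftrightarrow> h x \<in> dom \<theta>) \<and> (x \<in> dom \<kappa> \<longrightarrow> \<kappa> x = \<theta> (h x)))"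

definition simk :: "('d, 'c, 'r) interp \<Rightarrow> ('d \<rightharpoonup> 'col) \<Rightarrow> nat \<Rightarrow> ('d \<times> 'd) set" where
  "simk I \<kappa> k = {(x, y). x \<in> dm I \<and> y \<in> dm I \<and>
     (x = y \<or>
      (x \<in> dom \<kappa> \<and> y \<in> dom \<kappa> \<and> \<kappa> x = \<kappa> y \<and>
       (\<exists>h. is_col_hom (restr I (nbhd I k x)) (\<kappa> |` nbhd I k x)
                        (restr I (nbhd I k y)) (\<kappa> |` nbhd I k y) h \<and> h x = y) \<and>
       (\<exists>g. is_col_hom (restr I (nbhd I k y)) (\<kappa> |` nbhd I k y)
                        (restr I (nbhd I k x)) (\<kappa> |` nbhd I k x) g \<and> g y = x)))}"

definition sparse :: "('d, 'c, 'r) interp \<Rightarrow> ('d \<rightharpoonup> 'col) \<Rightarrow> nat \<Rightarrow> bool" where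
  "sparse I \<kappa> k \<longleftrightarrow> (\<forall>x \<in> dm I. \<forall>y y'. y \<in> nbhd I k x \<inter> dom \<kappa> \<longrightarrow>
      y' \<in> nbhd I k x \<inter> dom \<kappa> \<longrightarrow> y \<noteq> y' \<longrightarrow> \<kappa> y \<noteq> \<kappa> y')"

definition quot :: "('d, 'c, 'r) interp \<Rightarrow> ('d \<times> 'd) set \<Rightarrow> ('d set, 'c, 'r) interp" where
  "quot I R = \<lparr> dm = dm I // R,
                cn = (\<lambda>A. {R `` {x} | x. x \<in> cn I A}),
                rl = (\<lambda>r. {(R `` {x}, R `` {y}) | x y. (x, y) \<in> rl I r}) \<rparr>"

end

theory Submission
  imports Defs
begin

definition lcp :: "('d, 'c, 'r) interp \<Rightarrow> ('d \<rightharpoonup> 'col) \<Rightarrow> nat \<Rightarrow> 'd \<Rightarrow> ('d \<Rightarrow> 'd) \<Rightarrow> bool" where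
  "lcp I \<kappa> m b \<phi> \<longleftrightarrow> (\<forall>y \<in> nbhd I m b. \<phi> y \<in> dm I \<and> \<kappa> (\<phi> y) = \<kappa> y \<and>
      (\<forall>A. y \<in> cn I A \<longrightarrow> \<phi> y \<in> cn I A) \<and>
      (\<forall>r z. z \<in> nbhd I m b \<longrightarrow> (y, z) \<in> rl I r \<longrightarrow> (\<phi> y, \<phi> z) \<in> rl I r))"

lemma lcpD1: "lcp I \<kappa> m b \<phi> \<Longrightarrow> y \<in> nbhd I m b \<Longrightarrow> \<phi> y \<in> dm I"
  unfolding lcp_def by blast
lemma lcpD2: "lcp I \<kappa> m b \<phi> \<Longrightarrow> y \<in> nbhd I m b \<Longrightarrow> \<kappa> (\<phi> y) = \<kappa> y"
  unfolding lcp_def by blast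
lemma lcpD3: "lcp I \<kappa> m b \<phi> \<Longrightarrow> y \<in> nbhd I m b \<Longrightarrow> y \<in> cn I A \<Longrightarrow> \<phi> y \<in> cn I A"
  unfolding lcp_def by blast
lemma lcpD4: "lcp I \<kappa> m b \<phi> \<Longrightarrow> y \<in> nbhd I m b \<Longrightarrow> z \<in> nbhd I m b \<Longrightarrow> (y, z) \<in> rl I r
   \<Longrightarrow> (\<phi> y, \<phi> z) \<in> rl I r"
  unfolding lcp_def by blast

lemma nb_dm: "y \<in> nbhd I m x \<Longrightarrow> y \<in> dm I"
  by (simp add: nbhd_def)

lemma nb_self: "x \<in> dm I \<Longrightarrow> x \<in> nbhd I m x"
  unfolding nbhd_def by (rule CollectI, rule conjI, assumption, rule exI[of _ 0]) auto

lemma nb_self0: "x \<in> dm I \<Longrightarrow> x \<in> nbhd I 0 x"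
  by (rule nb_self)

lemma nb_mono: "m \<le> m' \<Longrightarrow> y \<in> nbhd I m x \<Longrightarrow> y \<in> nbhd I m' x"
  unfolding nbhd_def using le_trans by blast

lemma gedge_sym: "(x, y) \<in> gedge I \<Longrightarrow> (y, x) \<in> gedge I"
  unfolding gedge_def by blast

lemma relpow_sym: "(x, y) \<in> gedge I ^^ n \<Longrightarrow> (y, x) \<in> gedge I ^^ n"
proof (induction n arbitrary: x y)
  case 0 then show ?case by simp
next
  case (Suc n)
  from Suc.prems obtain z where z1: "(x, z) \<in> gedge I ^^ n" and z2: "(z, y) \<in> gedge I"
    by (rule relpow_Suc_E)
  show ?case by (rule relpow_Suc_I2[OF gedge_sym[OF z2] Suc.IH[OF z1]])
qed

lemma nb_sym: assumes "x \<in> dm I" "y \<in> nbhd I m x" shows "x \<in> nbhd I m y"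
proof -
  obtain n where "n \<le> m" "(x, y) \<in> gedge I ^^ n" using assms(2) unfolding nbhd_def by blast
  then have "(y, x) \<in> gedge I ^^ n" by (simp add: relpow_sym)
  then show ?thesis unfolding nbhd_def using assms(1) \<open>n \<le> m\<close> by blast
qed

lemma nb_trans: "y \<in> nbhd I a x \<Longrightarrow> z \<in> nbhd I b y \<Longrightarrow> z \<in> nbhd I (a + b) x"
proof -
  assume "y \<in> nbhd I a x" "z \<in> nbhd I b y"
  then obtain n1 n2 where "n1 \<le> a" "(x, y) \<in> gedge I ^^ n1" "n2 \<le> b" "(y, z) \<in> gedge I ^^ n2" "z \<in> dm I"
    unfolding nbhd_def by blast
  then have "(x, z) \<in> gedge I ^^ (n1 + n2)" by (auto simp: relpow_add)
  then show ?thesis unfolding nbhd_def using \<open>z \<in> dm I\<close> \<open>n1 \<le> a\<close> \<open>n2 \<le> b\<close>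
    by (intro CollectI conjI exI[of _ "n1+n2"]) auto
qed

lemma edge_nb:
  assumes "wf_interp I" "(c, d) \<in> rl I r \<or> (d, c) \<in> rl I r"
  shows "d \<in> nbhd I 1 c"
proof -
  have "d \<in> dm I" using assms unfolding wf_interp_def by blast
  moreover have "(c, d) \<in> gedge I" using assms(2) unfolding gedge_def by blast
  ultimately show ?thesis unfolding nbhd_def by (intro CollectI conjI exI[of _ 1]) auto
qed

lemma gedge_dm: "wf_interp I \<Longrightarrow> (x, y) \<in> gedge I \<Longrightarrow> y \<in> dm I"
  unfolding gedge_def wf_interp_def by blast

lemma gpath_dm: "wf_interp I \<Longrightarrow> x \<in> dm I \<Longrightarrow> (x, y) \<in> gedge I ^^ n \<Longrightarrow> y \<in> dm I"
  by (cases n) (auto elim: relpow_Suc_E dest: gedge_dm)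

lemma lcp_dist_aux:
  assumes wf: "wf_interp I" and l: "lcp I \<kappa> m c \<psi>" and c: "c \<in> dm I"
  shows "(c, y) \<in> gedge I ^^ n \<Longrightarrow> n \<le> m \<Longrightarrow> (\<psi> c, \<psi> y) \<in> gedge I ^^ n"
proof (induction n arbitrary: y)
  case 0 then show ?case by simp
next
  case (Suc n)
  from Suc.prems(1) obtain z where z: "(c, z) \<in> gedge I ^^ n" "(z, y) \<in> gedge I" by (rule relpow_Suc_E)
  have zd: "z \<in> dm I" using gpath_dm[OF wf c z(1)] .
  have yd: "y \<in> dm I" using gedge_dm[OF wf z(2)] .
  have zn: "z \<in> nbhd I m c" unfolding nbhd_def
    using zd z(1) Suc.prems(2) by (intro CollectI conjI exI[of _ n]) auto
  have yn: "y \<in> nbhd I m c" unfolding nbhd_def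
    using yd Suc.prems by (intro CollectI conjI exI[of _ "Suc n"]) auto
  from z(2) obtain r where "(z, y) \<in> rl I r \<or> (y, z) \<in> rl I r" unfolding gedge_def by blast
  then have "(\<psi> z, \<psi> y) \<in> rl I r \<or> (\<psi> y, \<psi> z) \<in> rl I r"
    using lcpD4[OF l zn yn] lcpD4[OF l yn zn] by blast
  then have "(\<psi> z, \<psi> y) \<in> gedge I" unfolding gedge_def by blast
  moreover have "(\<psi> c, \<psi> z) \<in> gedge I ^^ n" using Suc z by auto
  ultimately show ?case by (blast intro: relpow_Suc_I)
qed

lemma lcp_dist:
  assumes wf: "wf_interp I" and l: "lcp I \<kappa> m c \<psi>" and y: "y \<in> nbhd I j c" and j: "j \<le> m"
    and c: "c \<in> dm I"
  shows "\<psi> y \<in> nbhd I j (\<psi> c)"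
proof -
  obtain n where n: "n \<le> j" "(c, y) \<in> gedge I ^^ n" using y unfolding nbhd_def by blast
  have "(\<psi> c, \<psi> y) \<in> gedge I ^^ n" using lcp_dist_aux[OF wf l c n(2)] n j by simp
  moreover have "\<psi> y \<in> dm I" using lcpD1[OF l nb_mono[OF j y]] .
  ultimately show ?thesis unfolding nbhd_def using n by blast
qed

lemma lcp_sub:
  assumes l: "lcp I \<kappa> m b \<phi>" and sub: "nbhd I m' b' \<subseteq> nbhd I m b"
  shows "lcp I \<kappa> m' b' \<phi>"
  unfolding lcp_def
proof (intro ballI conjI allI impI)
  fix y assume y: "y \<in> nbhd I m' b'"
  then have y': "y \<in> nbhd I m b" using sub by blast
  show "\<phi> y \<in> dm I" by (rule lcpD1[OF l y'])
  show "\<kappa> (\<phi> y) = \<kappa> y" by (rule lcpD2[OF l y'])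
  fix A assume "y \<in> cn I A" then show "\<phi> y \<in> cn I A" by (rule lcpD3[OF l y'])
next
  fix y r z assume "y \<in> nbhd I m' b'" "z \<in> nbhd I m' b'" "(y, z) \<in> rl I r"
  then show "(\<phi> y, \<phi> z) \<in> rl I r" using lcpD4[OF l] sub by (meson subsetD)
qed

lemma lcp_shift:
  assumes "lcp I \<kappa> m b \<phi>" "b' \<in> nbhd I j b" "j + m' \<le> m"
  shows "lcp I \<kappa> m' b' \<phi>"
proof -
  have sub: "nbhd I m' b' \<subseteq> nbhd I m b"
  proof
    fix y assume "y \<in> nbhd I m' b'"
    from nb_trans[OF assms(2) this] show "y \<in> nbhd I m b" by (rule nb_mono[rotated]) (use assms(3) in simp)
  qed
  show ?thesis by (rule lcp_sub[OF assms(1) sub])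
qed

lemma lcp_comp:
  assumes wf: "wf_interp I" and l1: "lcp I \<kappa> m' c \<psi>" and l2: "lcp I \<kappa> m a \<phi>"
    and e: "\<psi> c = a" and le: "m \<le> m'" and c: "c \<in> dm I"
  shows "lcp I \<kappa> m c (\<phi> \<circ> \<psi>)"
proof -
  have map: "\<psi> y \<in> nbhd I m a" if "y \<in> nbhd I m c" for y
  proof -
    have "\<psi> y \<in> nbhd I m (\<psi> c)" by (rule lcp_dist[OF wf l1 that le c])
    then show ?thesis using e by simp
  qed
  have sub: "y \<in> nbhd I m' c" if "y \<in> nbhd I m c" for y
    using nb_mono[OF le that] .
  show ?thesis unfolding lcp_def
  proof (intro ballI conjI allI impI)
    fix y assume y: "y \<in> nbhd I m c"
    show "(\<phi> \<circ> \<psi>) y \<in> dm I" using lcpD1[OF l2 map[OF y]] by simp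
    show "\<kappa> ((\<phi> \<circ> \<psi>) y) = \<kappa> y" using lcpD2[OF l2 map[OF y]] lcpD2[OF l1 sub[OF y]] by simp
    fix A assume "y \<in> cn I A"
    then show "(\<phi> \<circ> \<psi>) y \<in> cn I A" using lcpD3[OF l2 map[OF y]] lcpD3[OF l1 sub[OF y]] by simp
  next
    fix y r z assume y: "y \<in> nbhd I m c" and z: "z \<in> nbhd I m c" and yz: "(y, z) \<in> rl I r"
    have "(\<psi> y, \<psi> z) \<in> rl I r" by (rule lcpD4[OF l1 sub[OF y] sub[OF z] yz])
    then show "((\<phi> \<circ> \<psi>) y, (\<phi> \<circ> \<psi>) z) \<in> rl I r" using lcpD4[OF l2 map[OF y] map[OF z]] by simp
  qed
qed

lemma lcp_id: "lcp I \<kappa> m b id"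
  unfolding lcp_def by (simp add: nb_dm)

lemma col_hom_lcp:
  assumes "is_col_hom (restr I (nbhd I m x)) (\<kappa> |` nbhd I m x) (restr I (nbhd I m y)) (\<kappa> |` nbhd I m y) h"
  shows "lcp I \<kappa> m x h"
  unfolding lcp_def
proof (intro ballI conjI allI impI)
  fix z assume z: "z \<in> nbhd I m x"
  have zd: "z \<in> dm (restr I (nbhd I m x))" using z nb_dm unfolding restr_def by fastforce
  have hz: "h z \<in> dm I \<and> h z \<in> nbhd I m y"
    using assms zd unfolding is_col_hom_def is_hom_def restr_def by auto
  then show "h z \<in> dm I" by simp
  have c: "(z \<in> dom (\<kappa> |` nbhd I m x) \<longleftrightarrow> h z \<in> dom (\<kappa> |` nbhd I m y)) \<and>
     (z \<in> dom (\<kappa> |` nbhd I m x) \<longrightarrow> (\<kappa> |` nbhd I m x) z = (\<kappa> |` nbhd I m y) (h z))"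
    using assms zd unfolding is_col_hom_def by blast
  then show "\<kappa> (h z) = \<kappa> z" using z hz by (auto simp: restrict_map_def split: if_splits)
  fix A assume "z \<in> cn I A"
  then have "z \<in> cn (restr I (nbhd I m x)) A" using z unfolding restr_def by simp
  then show "h z \<in> cn I A" using assms unfolding is_col_hom_def is_hom_def restr_def by auto
next
  fix z r w assume "z \<in> nbhd I m x" "w \<in> nbhd I m x" "(z, w) \<in> rl I r"
  then have "(z, w) \<in> rl (restr I (nbhd I m x)) r" unfolding restr_def by simp
  then show "(h z, h w) \<in> rl I r" using assms unfolding is_col_hom_def is_hom_def restr_def by auto
qed


locale setting =
  fixes I :: "('d, 'c, 'r) interp" and \<kappa> :: "'d \<rightharpoonup> 'col" and K :: nat
  assumes wfI: "wf_interp I" and sp: "sparse I \<kappa> K"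
begin

abbreviation "R \<equiv> simk I \<kappa> K"

lemma simk_dm: "(x, y) \<in> R \<Longrightarrow> x \<in> dm I \<and> y \<in> dm I"
  unfolding simk_def by blast

lemma simk_refl: "x \<in> dm I \<Longrightarrow> (x, x) \<in> R"
  unfolding simk_def by blast

lemma simk_col: "(x, y) \<in> R \<Longrightarrow> \<kappa> x = \<kappa> y"
  unfolding simk_def by blast

lemma simk_unc: "(x, y) \<in> R \<Longrightarrow> \<kappa> x = None \<Longrightarrow> x = y"
  unfolding simk_def by blast

lemma simk_fwd: "(x, y) \<in> R \<Longrightarrow> x \<noteq> y \<Longrightarrow> \<exists>h. lcp I \<kappa> K x h \<and> h x = y"
proof -
  assume "(x, y) \<in> R" "x \<noteq> y"
  then obtain h where hh: "is_col_hom (restr I (nbhd I K x)) (\<kappa> |` nbhd I K x)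
                        (restr I (nbhd I K y)) (\<kappa> |` nbhd I K y) h" "h x = y"
    unfolding simk_def by blast
  then show ?thesis using col_hom_lcp[OF hh(1)] by blast
qed

lemma simk_bwd: "(x, y) \<in> R \<Longrightarrow> x \<noteq> y \<Longrightarrow> \<exists>h. lcp I \<kappa> K y h \<and> h y = x"
proof -
  assume "(x, y) \<in> R" "x \<noteq> y"
  then obtain h where hh: "is_col_hom (restr I (nbhd I K y)) (\<kappa> |` nbhd I K y)
                        (restr I (nbhd I K x)) (\<kappa> |` nbhd I K x) h" "h y = x"
    unfolding simk_def by blast
  then show ?thesis using col_hom_lcp[OF hh(1)] by blast
qed

lemma class_col: "b \<in> R `` {a} \<Longrightarrow> b' \<in> R `` {a} \<Longrightarrow> \<kappa> b = \<kappa> b'"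
  using simk_col by (metis Image_singleton_iff)

lemma class_unc: "b \<in> R `` {a} \<Longrightarrow> b' \<in> R `` {a} \<Longrightarrow> \<kappa> b = None \<Longrightarrow> b' = b"
proof -
  assume ab: "b \<in> R `` {a}" and ab': "b' \<in> R `` {a}" and n: "\<kappa> b = None"
  have "\<kappa> a = None" using simk_col ab n by auto
  then have "a = b" "a = b'" using simk_unc ab ab' by auto
  then show ?thesis by simp
qed

lemma class_mem: "a \<in> dm I \<Longrightarrow> a \<in> R `` {a}"
  using simk_refl by blast

lemma class_dm: "b \<in> R `` {a} \<Longrightarrow> b \<in> dm I"
  using simk_dm by blast

lemma transfer:
  assumes ab: "b \<in> R `` {a}" and ab': "b' \<in> R `` {a}" and l: "lcp I \<kappa> m b \<phi>" and mK: "m \<le> K"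
  shows "\<exists>\<psi>. lcp I \<kappa> m b' \<psi> \<and> \<psi> b' = \<phi> b"
proof -
  have ad: "a \<in> dm I" "b \<in> dm I" "b' \<in> dm I" using simk_dm ab ab' by auto
  obtain \<phi>1 where l1: "lcp I \<kappa> m a \<phi>1" "\<phi>1 a = \<phi> b"
  proof (cases "a = b")
    case True then show ?thesis using that l by auto
  next
    case False
    then obtain h where h: "lcp I \<kappa> K a h" "h a = b" using simk_fwd ab by auto
    have "lcp I \<kappa> m a (\<phi> \<circ> h)" by (rule lcp_comp[OF wfI h(1) l h(2) mK ad(1)])
    then show ?thesis using that[of "\<phi> \<circ> h"] h(2) by auto
  qed
  show ?thesis
  proof (cases "a = b'")
    case True then show ?thesis using l1 by auto
  next
    case False
    then obtain h where h: "lcp I \<kappa> K b' h" "h b' = a" using simk_bwd ab' by auto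
    have "lcp I \<kappa> m b' (\<phi>1 \<circ> h)" by (rule lcp_comp[OF wfI h(1) l1(1) h(2) mK ad(3)])
    then show ?thesis using l1(2) h(2) by (intro exI[of _ "\<phi>1 \<circ> h"]) auto
  qed
qed

lemma sparse_eq:
  assumes "x \<in> dm I" "y \<in> nbhd I K x" "y' \<in> nbhd I K x" "\<kappa> y = \<kappa> y'" "\<kappa> y \<noteq> None"
  shows "y = y'"
proof (rule ccontr)
  assume "y \<noteq> y'"
  moreover have "y \<in> nbhd I K x \<inter> dom \<kappa>" "y' \<in> nbhd I K x \<inter> dom \<kappa>" using assms by auto
  ultimately have "\<kappa> y \<noteq> \<kappa> y'" using sp assms(1) unfolding sparse_def by blast
  then show False using assms(4) by simp
qed

lemma quot_dm: "X \<in> dm (quot I R) \<Longrightarrow> \<exists>a \<in> dm I. X = R `` {a}"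
  unfolding quot_def quotient_def by auto

lemma quot_cn: "X \<in> cn (quot I R) A \<Longrightarrow> \<exists>a. a \<in> cn I A \<and> X = R `` {a}"
  unfolding quot_def by auto

lemma quot_rl: "(X, Y) \<in> rl (quot I R) r \<Longrightarrow> \<exists>c d. (c, d) \<in> rl I r \<and> X = R `` {c} \<and> Y = R `` {d}"
  unfolding quot_def by auto

lemma rl_dm: "(c, d) \<in> rl I r \<Longrightarrow> c \<in> dm I \<and> d \<in> dm I"
  using wfI unfolding wf_interp_def by blast

lemma cn_dm: "c \<in> cn I A \<Longrightarrow> c \<in> dm I"
  using wfI unfolding wf_interp_def by blast


lemma backward:
  fixes Q :: "('q, 'c, 'r) interp" and g :: "'q \<Rightarrow> 'd set" and B :: nat
  assumes wfQ: "wf_interp Q" and hg: "is_hom Q (quot I R) g"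
    and BK: "2 * B + 1 \<le> K"
    and paths: "\<And>E x y. E \<subseteq> dm Q \<times> dm Q \<Longrightarrow> x \<in> dm Q \<Longrightarrow> y \<in> dm Q \<Longrightarrow> (x, y) \<in> E\<^sup>*
                 \<Longrightarrow> \<exists>n \<le> B. (x, y) \<in> E ^^ n"
  shows "\<exists>f. is_hom Q I f"
proof -
  define E where "E = {(p, q). p \<in> dm Q \<and> q \<in> dm Q \<and> (\<exists>r. (p, q) \<in> rl Q r \<or> (q, p) \<in> rl Q r)}"
  define uu where "uu q = (SOME u. u \<in> g q)" for q
  define unc where "unc q \<longleftrightarrow> \<kappa> (uu q) = None" for q
  define Eu where "Eu = {(p, q). (p, q) \<in> E \<and> unc p \<and> unc q}"
  define Good where "Good q x m \<longleftrightarrow> (\<exists>b \<in> g q. \<exists>\<phi>. lcp I \<kappa> m b \<phi> \<and> \<phi> b = x)" for q x m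
  define a0 where "a0 q = uu (SOME p. p \<in> E\<^sup>* `` {q})" for q
  define fc where "fc q = (SOME x. x \<in> nbhd I B (a0 q) \<and> Good q x 1)" for q
  define phi where "phi q = (SOME \<phi>. \<exists>b. lcp I \<kappa> (B + 1) b \<phi> \<and>
      (\<forall>x \<in> Eu\<^sup>* `` {q}. uu x \<in> nbhd I B b \<and> \<phi> (uu x) \<in> nbhd I (K - 1) (a0 q)))" for q
  define f where "f q = (if unc q then phi q (uu q) else fc q)" for q

  have gq: "\<exists>a \<in> dm I. g q = R `` {a}" if hyp: "q \<in> dm Q" for q
    using hg that quot_dm unfolding is_hom_def by blast
  have uu: "uu q \<in> g q \<and> uu q \<in> dm I" if hyp: "q \<in> dm Q" for q
  proof -
    obtain a where a: "a \<in> dm I" "g q = R `` {a}" using gq[OF hyp] by blast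
    then have "a \<in> g q" using class_mem by simp
    then have "uu q \<in> g q" unfolding uu_def by (rule someI)
    then show ?thesis using a class_dm by auto
  qed
  have g_dm: "b \<in> dm I" if hyp: "q \<in> dm Q" "b \<in> g q" for q b
    using gq[OF that(1)] that(2) class_dm by auto
  have unc_single: "b = uu q" if hyp: "q \<in> dm Q" "unc q" "b \<in> g q" for q b
  proof -
    obtain a where a: "g q = R `` {a}" using gq[OF hyp(1)] by blast
    show ?thesis using class_unc[of "uu q" a b] uu[OF that(1)] that(2,3) a unfolding unc_def by simp
  qed
  have same_col: "\<kappa> b = \<kappa> b'" if hyp: "q \<in> dm Q" "b \<in> g q" "b' \<in> g q" for q b b'
  proof -
    obtain a where a: "g q = R `` {a}" using gq[OF hyp(1)] by blast
    show ?thesis using class_col[of b a b'] that a by simp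
  qed
  have col_all: "\<kappa> b \<noteq> None" if hyp: "q \<in> dm Q" "\<not> unc q" "b \<in> g q" for q b
    using same_col[OF that(1) that(3), of "uu q"] uu[OF that(1)] that(2) unfolding unc_def by simp
  have Good_tr: "\<exists>\<psi>. lcp I \<kappa> m b \<psi> \<and> \<psi> b = x"
    if hyp: "q \<in> dm Q" "Good q x m" "m \<le> K" "b \<in> g q" for q x m b
  proof -
    obtain b' \<phi> where b': "b' \<in> g q" "lcp I \<kappa> m b' \<phi>" "\<phi> b' = x" using hyp(2) unfolding Good_def by blast
    obtain a where a: "g q = R `` {a}" using gq[OF hyp(1)] by blast
    show ?thesis using transfer[of b' a b m \<phi>] b' a that(3,4) by auto
  qed
  have Good_col: "\<kappa> x = \<kappa> b" if hyp: "q \<in> dm Q" "Good q x m" "b \<in> g q" for q x m b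
  proof -
    obtain b' \<phi> where b': "b' \<in> g q" "lcp I \<kappa> m b' \<phi>" "\<phi> b' = x" using hyp(2) unfolding Good_def by blast
    have "\<kappa> (\<phi> b') = \<kappa> b'" by (rule lcpD2[OF b'(2) nb_self[OF g_dm[OF that(1) b'(1)]]])
    then show ?thesis using same_col[OF that(1) b'(1) that(3)] b'(3) by simp
  qed
  have Good_mono: "Good q x m'" if hyp: "q \<in> dm Q" "Good q x m" "m' \<le> m" for q x m m'
  proof -
    obtain b' \<phi> where b': "b' \<in> g q" "lcp I \<kappa> m b' \<phi>" "\<phi> b' = x" using hyp(2) unfolding Good_def by blast
    have "lcp I \<kappa> m' b' \<phi>" by (rule lcp_shift[OF b'(2) nb_self0[OF g_dm[OF that(1) b'(1)]]]) (use that(3) in simp)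
    then show ?thesis unfolding Good_def using b' by blast
  qed
  have E_sub: "E \<subseteq> dm Q \<times> dm Q" unfolding E_def by blast
  have E_sym: "sym E" unfolding E_def sym_def by blast
  have Eu_sub: "Eu \<subseteq> E" unfolding Eu_def by blast
  have Eu_sub2: "Eu \<subseteq> dm Q \<times> dm Q" using Eu_sub E_sub by blast
  have Eu_sym: "sym Eu" using E_sym unfolding Eu_def sym_def by blast
  have Edge: "\<exists>c d. c \<in> g p \<and> d \<in> g q \<and> d \<in> nbhd I 1 c" if hyp: "(p, q) \<in> E" for p q
  proof -
    from that obtain r where pq: "p \<in> dm Q" "q \<in> dm Q" "(p, q) \<in> rl Q r \<or> (q, p) \<in> rl Q r"
      unfolding E_def by blast
    from pq(3) show ?thesis
    proof
      assume "(p, q) \<in> rl Q r"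
      then have "(g p, g q) \<in> rl (quot I R) r" using hg unfolding is_hom_def by blast
      then obtain c d where cd: "(c, d) \<in> rl I r" "g p = R `` {c}" "g q = R `` {d}" using quot_rl by blast
      have "c \<in> g p" "d \<in> g q" using cd rl_dm class_mem by auto
      moreover have "d \<in> nbhd I 1 c" using edge_nb[OF wfI] cd(1) by blast
      ultimately show ?thesis by blast
    next
      assume "(q, p) \<in> rl Q r"
      then have "(g q, g p) \<in> rl (quot I R) r" using hg unfolding is_hom_def by blast
      then obtain c d where cd: "(d, c) \<in> rl I r" "g p = R `` {c}" "g q = R `` {d}" using quot_rl by blast
      have "c \<in> g p" "d \<in> g q" using cd rl_dm class_mem by auto
      moreover have "d \<in> nbhd I 1 c" using edge_nb[OF wfI] cd(1) by blast
      ultimately show ?thesis by blast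
    qed
  qed
  have E1: "\<exists>x \<in> nbhd I n a. Good q x (K - n)"
    if hyp: "(q0, q) \<in> E ^^ n" "q0 \<in> dm Q" "a \<in> g q0" "n \<le> K" for n q0 q a
    using that
  proof (induction n arbitrary: q)
    case 0
    then have "q = q0" by simp
    have ad: "a \<in> dm I" using g_dm 0 by blast
    have "Good q a (K - 0)" unfolding Good_def using \<open>q = q0\<close> 0 lcp_id[of I \<kappa> K a]
      by (intro bexI[of _ a] exI[of _ id]) auto
    then show ?case using nb_self[OF ad] by blast
  next
    case (Suc n)
    from Suc.prems(1) obtain p where p1: "(q0, p) \<in> E ^^ n" and p2: "(p, q) \<in> E" by (rule relpow_Suc_E)
    obtain x where x: "x \<in> nbhd I n a" "Good p x (K - n)" using Suc.IH[OF p1] Suc.prems by auto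
    have pd: "p \<in> dm Q" using p2 E_sub by blast
    obtain c d where cd: "c \<in> g p" "d \<in> g q" "d \<in> nbhd I 1 c" using Edge[OF p2] by blast
    have cdm: "c \<in> dm I" using g_dm[OF pd cd(1)] .
    obtain \<psi> where psi: "lcp I \<kappa> (K - n) c \<psi>" "\<psi> c = x" using Good_tr[OF pd x(2) _ cd(1)] by auto
    have "\<psi> d \<in> nbhd I 1 (\<psi> c)" by (rule lcp_dist[OF wfI psi(1) cd(3) _ cdm]) (use Suc.prems(4) in simp)
    then have "\<psi> d \<in> nbhd I 1 x" using psi(2) by simp
    then have y: "\<psi> d \<in> nbhd I (Suc n) a" using nb_trans[OF x(1)] by fastforce
    have "lcp I \<kappa> (K - Suc n) d \<psi>" by (rule lcp_shift[OF psi(1) cd(3)]) (use Suc.prems(4) in simp)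
    then have "Good q (\<psi> d) (K - Suc n)" unfolding Good_def using cd(2) by blast
    then show ?case using y by blast
  qed
  have anc: "(SOME p. p \<in> E\<^sup>* `` {q}) \<in> dm Q \<and> ((SOME p. p \<in> E\<^sup>* `` {q}), q) \<in> E\<^sup>*"
    if hyp: "q \<in> dm Q" for q
  proof -
    have "q \<in> E\<^sup>* `` {q}" by simp
    then have m: "(SOME p. p \<in> E\<^sup>* `` {q}) \<in> E\<^sup>* `` {q}" by (rule someI)
    define p where "p = (SOME p. p \<in> E\<^sup>* `` {q})"
    have qp: "(q, p) \<in> E\<^sup>*" using m unfolding p_def by simp
    have "p \<in> dm Q" using qp
    proof (cases rule: rtranclE)
      case base then show ?thesis using that by simp
    next
      case (step y) then show ?thesis using E_sub by blast
    qed
    moreover have "(p, q) \<in> E\<^sup>*" using qp sym_rtrancl[OF E_sym] unfolding sym_def by blast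
    ultimately show ?thesis unfolding p_def by simp
  qed
  have img_eq: "S\<^sup>* `` {p} = S\<^sup>* `` {q}" if hyp: "sym S" "(p, q) \<in> S\<^sup>*" for S :: "('q \<times> 'q) set" and p q
  proof -
    have qp: "(q, p) \<in> S\<^sup>*" using that sym_rtrancl unfolding sym_def by blast
    show ?thesis
    proof
      show "S\<^sup>* `` {p} \<subseteq> S\<^sup>* `` {q}" using qp by (auto intro: rtrancl_trans)
      show "S\<^sup>* `` {q} \<subseteq> S\<^sup>* `` {p}" using that(2) by (auto intro: rtrancl_trans)
    qed
  qed
  have a0_eq: "a0 p = a0 q" if hyp: "(p, q) \<in> E\<^sup>*" for p q
    unfolding a0_def using img_eq[OF E_sym that] by simp
  have a0_g: "\<exists>p. p \<in> dm Q \<and> (p, q) \<in> E\<^sup>* \<and> a0 q \<in> g p" if hyp: "q \<in> dm Q" for q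
    using anc[OF that] uu unfolding a0_def by blast
  have a0_dm: "a0 q \<in> dm I" if hyp: "q \<in> dm Q" for q
    using a0_g[OF that] g_dm by blast
  have BK': "B \<le> K" using BK by simp
  have exist: "\<exists>n \<le> B. \<exists>x \<in> nbhd I n (a0 q). Good q x (K - n)" if hyp: "q \<in> dm Q" for q
  proof -
    obtain p where p: "p \<in> dm Q" "(p, q) \<in> E\<^sup>*" "a0 q \<in> g p" using a0_g[OF hyp] by blast
    obtain n where n: "n \<le> B" "(p, q) \<in> E ^^ n" using paths[OF E_sub p(1) hyp p(2)] by blast
    have "\<exists>x \<in> nbhd I n (a0 q). Good q x (K - n)" by (rule E1[OF n(2) p(1) p(3)]) (use n(1) BK' in simp)
    then show ?thesis using n(1) by blast
  qed
  have fc_prop: "fc q \<in> nbhd I B (a0 q) \<and> Good q (fc q) 1" if hyp: "q \<in> dm Q" for q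
  proof -
    obtain n x where nx: "n \<le> B" "x \<in> nbhd I n (a0 q)" "Good q x (K - n)" using exist[OF hyp] by blast
    have "x \<in> nbhd I B (a0 q)" using nb_mono[OF nx(1) nx(2)] .
    moreover have "Good q x 1" by (rule Good_mono[OF that nx(3)]) (use nx(1) BK in simp)
    ultimately have "\<exists>x. x \<in> nbhd I B (a0 q) \<and> Good q x 1" by blast
    then show ?thesis unfolding fc_def by (rule someI_ex)
  qed
  have Eu_path: "uu x \<in> nbhd I j (uu q)" if hyp: "(q, x) \<in> Eu ^^ j" "q \<in> dm Q" "unc q" for j q x
    using that
  proof (induction j arbitrary: x)
    case 0 then have "x = q" by simp
    then show ?case using uu[OF 0(2)] by (simp add: nb_self)
  next
    case (Suc j)
    from Suc.prems(1) obtain p where p1: "(q, p) \<in> Eu ^^ j" and p2: "(p, x) \<in> Eu" by (rule relpow_Suc_E)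
    have px: "p \<in> dm Q" "unc p" "x \<in> dm Q" "unc x" "(p, x) \<in> E" using p2 Eu_sub2 unfolding Eu_def by auto
    obtain c d where cd: "c \<in> g p" "d \<in> g x" "d \<in> nbhd I 1 c" using Edge[OF px(5)] by blast
    have "c = uu p" "d = uu x" using unc_single px cd by auto
    then have e1: "uu x \<in> nbhd I 1 (uu p)" using cd by simp
    have e2: "uu p \<in> nbhd I j (uu q)" using Suc.IH[OF p1] Suc.prems(2,3) by blast
    have "uu x \<in> nbhd I (j + 1) (uu q)" by (rule nb_trans[OF e2 e1])
    then show ?case by simp
  qed
  have Eu_mem: "x = q \<or> (x \<in> dm Q \<and> unc x)" if hyp: "(q, x) \<in> Eu\<^sup>*" for q x
    using that
  proof (cases rule: rtranclE)
    case base then show ?thesis by simp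
  next
    case (step y) then show ?thesis using Eu_sub2 unfolding Eu_def by blast
  qed
  have phi_prop: "\<exists>b. lcp I \<kappa> (B + 1) b (phi q) \<and>
      (\<forall>x \<in> Eu\<^sup>* `` {q}. uu x \<in> nbhd I B b \<and> phi q (uu x) \<in> nbhd I (K - 1) (a0 q))"
    if hyp: "q \<in> dm Q" "unc q" for q
  proof -
    obtain n y where ny: "n \<le> B" "y \<in> nbhd I n (a0 q)" "Good q y (K - n)" using exist[OF hyp(1)] by blast
    obtain \<psi> where psi: "lcp I \<kappa> (K - n) (uu q) \<psi>" "\<psi> (uu q) = y"
      using Good_tr[OF hyp(1) ny(3) _ ] uu[OF hyp(1)] by auto
    have uqd: "uu q \<in> dm I" using uu[OF that(1)] by simp
    have l: "lcp I \<kappa> (B + 1) (uu q) \<psi>" by (rule lcp_shift[OF psi(1) nb_self0[OF uqd]]) (use ny(1) BK in simp)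
    have "\<forall>x \<in> Eu\<^sup>* `` {q}. uu x \<in> nbhd I B (uu q) \<and> \<psi> (uu x) \<in> nbhd I (K - 1) (a0 q)"
    proof
      fix x assume "x \<in> Eu\<^sup>* `` {q}"
      then have qx: "(q, x) \<in> Eu\<^sup>*" by simp
      have xd: "x \<in> dm Q" using Eu_mem[OF qx] that by auto
      obtain j where j: "j \<le> B" "(q, x) \<in> Eu ^^ j" using paths[OF Eu_sub2 hyp(1) xd qx] by blast
      have ux: "uu x \<in> nbhd I j (uu q)" by (rule Eu_path[OF j(2) that])
      have "\<psi> (uu x) \<in> nbhd I j (\<psi> (uu q))" by (rule lcp_dist[OF wfI psi(1) ux _ uqd]) (use j(1) ny(1) BK in simp)
      then have "\<psi> (uu x) \<in> nbhd I (n + j) (a0 q)" using nb_trans[OF ny(2)] psi(2) by simp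
      then have "\<psi> (uu x) \<in> nbhd I (K - 1) (a0 q)" by (rule nb_mono[rotated]) (use j(1) ny(1) BK in simp)
      moreover have "uu x \<in> nbhd I B (uu q)" by (rule nb_mono[OF j(1) ux])
      ultimately show "uu x \<in> nbhd I B (uu q) \<and> \<psi> (uu x) \<in> nbhd I (K - 1) (a0 q)" by simp
    qed
    then have "\<exists>\<phi>. \<exists>b. lcp I \<kappa> (B + 1) b \<phi> \<and>
      (\<forall>x \<in> Eu\<^sup>* `` {q}. uu x \<in> nbhd I B b \<and> \<phi> (uu x) \<in> nbhd I (K - 1) (a0 q))" using l by blast
    then show ?thesis unfolding phi_def by (rule someI_ex)
  qed
  have phi_eq: "phi p = phi q" if hyp: "(q, p) \<in> Eu\<^sup>*" for p q
  proof -
    have "(q, p) \<in> E\<^sup>*" using that rtrancl_mono[OF Eu_sub] by blast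
    then have "a0 p = a0 q" using a0_eq by metis
    moreover have "Eu\<^sup>* `` {p} = Eu\<^sup>* `` {q}" using img_eq[OF Eu_sym that] by simp
    ultimately show ?thesis unfolding phi_def by simp
  qed
  have mixed: "phi p d = fc q \<and> (\<forall>r. (uu p, d) \<in> rl I r \<longrightarrow> (phi p (uu p), phi p d) \<in> rl I r)
      \<and> (\<forall>r. (d, uu p) \<in> rl I r \<longrightarrow> (phi p d, phi p (uu p)) \<in> rl I r)"
    if hyp: "p \<in> dm Q" "unc p" "q \<in> dm Q" "\<not> unc q" "d \<in> g q" "d \<in> nbhd I 1 (uu p)"
       "a0 p = a0 q" for p q d
  proof -
    obtain b where b: "lcp I \<kappa> (B + 1) b (phi p)"
      "\<forall>x \<in> Eu\<^sup>* `` {p}. uu x \<in> nbhd I B b \<and> phi p (uu x) \<in> nbhd I (K - 1) (a0 p)"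
      using phi_prop[OF hyp(1,2)] by blast
    have pp: "p \<in> Eu\<^sup>* `` {p}" by simp
    have ub: "uu p \<in> nbhd I B b" "phi p (uu p) \<in> nbhd I (K - 1) (a0 p)" using b(2) pp by auto
    have l1: "lcp I \<kappa> 1 (uu p) (phi p)" by (rule lcp_shift[OF b(1) ub(1)]) simp
    have upd: "uu p \<in> dm I" using uu[OF hyp(1)] by simp
    have "phi p d \<in> nbhd I 1 (phi p (uu p))" by (rule lcp_dist[OF wfI l1 hyp(6) _ upd]) simp
    then have "phi p d \<in> nbhd I (K - 1 + 1) (a0 p)" by (rule nb_trans[OF ub(2)])
    then have dK: "phi p d \<in> nbhd I K (a0 q)" using BK hyp(7) by simp
    have fK: "fc q \<in> nbhd I K (a0 q)" by (rule nb_mono[OF BK' conjunct1[OF fc_prop[OF hyp(3)]]])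
    have c1: "\<kappa> (phi p d) = \<kappa> d" by (rule lcpD2[OF l1 hyp(6)])
    have c2: "\<kappa> (fc q) = \<kappa> d" using Good_col[OF hyp(3) _ hyp(5)] fc_prop[OF hyp(3)] by blast
    have c3: "\<kappa> d \<noteq> None" using col_all[OF hyp(3,4,5)] .
    have eq: "phi p d = fc q" by (rule sparse_eq[OF a0_dm[OF hyp(3)] dK fK]) (use c1 c2 c3 in auto)
    have upn: "uu p \<in> nbhd I 1 (uu p)" by (rule nb_self[OF upd])
    show ?thesis using eq lcpD4[OF l1 upn hyp(6)] lcpD4[OF l1 hyp(6) upn] by blast
  qed
  have fdm: "f q \<in> dm I" if hyp: "q \<in> dm Q" for q
  proof (cases "unc q")
    case True
    obtain b where b: "\<forall>x \<in> Eu\<^sup>* `` {q}. uu x \<in> nbhd I B b \<and> phi q (uu x) \<in> nbhd I (K - 1) (a0 q)"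
      using phi_prop[OF hyp True] by blast
    have "q \<in> Eu\<^sup>* `` {q}" by simp
    then have "phi q (uu q) \<in> nbhd I (K - 1) (a0 q)" using b by blast
    then show ?thesis unfolding f_def using True nb_dm by metis
  next
    case False
    then show ?thesis unfolding f_def using nb_dm[OF conjunct1[OF fc_prop[OF hyp]]] by simp
  qed
  have fcn: "f q \<in> cn I A" if hyp: "q \<in> cn Q A" for q A
  proof -
    have qd: "q \<in> dm Q" using wfQ hyp unfolding wf_interp_def by blast
    have "g q \<in> cn (quot I R) A" using hg hyp unfolding is_hom_def by blast
    then obtain w where w: "w \<in> cn I A" "g q = R `` {w}" using quot_cn by blast
    have wg: "w \<in> g q" using w class_mem cn_dm by simp
    show ?thesis
    proof (cases "unc q")
      case True
      have wu: "w = uu q" by (rule unc_single[OF qd True wg])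
      obtain b where b: "lcp I \<kappa> (B + 1) b (phi q)"
        "\<forall>x \<in> Eu\<^sup>* `` {q}. uu x \<in> nbhd I B b \<and> phi q (uu x) \<in> nbhd I (K - 1) (a0 q)"
        using phi_prop[OF qd True] by blast
      have "q \<in> Eu\<^sup>* `` {q}" by simp
      then have "uu q \<in> nbhd I B b" using b(2) by blast
      then have "uu q \<in> nbhd I (B + 1) b" by (rule nb_mono[rotated]) simp
      then have "phi q (uu q) \<in> cn I A" using lcpD3[OF b(1)] w(1) wu by blast
      then show ?thesis unfolding f_def using True by simp
    next
      case False
      obtain \<psi> where psi: "lcp I \<kappa> 1 w \<psi>" "\<psi> w = fc q"
        using Good_tr[OF qd _ _ wg, of "fc q" 1] fc_prop[OF qd] BK by auto
      have "\<psi> w \<in> cn I A" by (rule lcpD3[OF psi(1) nb_self[OF cn_dm[OF w(1)]] w(1)])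
      then show ?thesis unfolding f_def using False psi(2) by simp
    qed
  qed
  have frl: "(f p, f q) \<in> rl I r" if hyp: "(p, q) \<in> rl Q r" for p q r
  proof -
    have pd: "p \<in> dm Q" and qd: "q \<in> dm Q" using wfQ hyp unfolding wf_interp_def by blast+
    have "(g p, g q) \<in> rl (quot I R) r" using hg hyp unfolding is_hom_def by blast
    then obtain c d where cd: "(c, d) \<in> rl I r" "g p = R `` {c}" "g q = R `` {d}" using quot_rl by blast
    have cg: "c \<in> g p" and dg: "d \<in> g q" using cd rl_dm class_mem by auto
    have cdm: "c \<in> dm I" and ddm: "d \<in> dm I" using rl_dm[OF cd(1)] by auto
    have pqE: "(p, q) \<in> E" unfolding E_def using pd qd hyp by blast
    have a0pq: "a0 p = a0 q" using a0_eq[of p q] pqE by blast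
    have dn: "d \<in> nbhd I 1 c" using edge_nb[OF wfI] cd(1) by blast
    have cn': "c \<in> nbhd I 1 d" using edge_nb[OF wfI] cd(1) by blast
    show ?thesis
    proof (cases "unc p")
      case up: True
      have cu: "c = uu p" by (rule unc_single[OF pd up cg])
      show ?thesis
      proof (cases "unc q")
        case uq: True
        have du: "d = uu q" by (rule unc_single[OF qd uq dg])
        have "(p, q) \<in> Eu" unfolding Eu_def using pqE up uq by blast
        then have "phi q = phi p" using phi_eq[of p q] by blast
        obtain b where b: "lcp I \<kappa> (B + 1) b (phi p)"
          "\<forall>x \<in> Eu\<^sup>* `` {p}. uu x \<in> nbhd I B b \<and> phi p (uu x) \<in> nbhd I (K - 1) (a0 p)"
          using phi_prop[OF pd up] by blast
        have "p \<in> Eu\<^sup>* `` {p}" "q \<in> Eu\<^sup>* `` {p}" using \<open>(p, q) \<in> Eu\<close> by auto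
        then have "uu p \<in> nbhd I B b" "uu q \<in> nbhd I B b" using b(2) by blast+
        then have "uu p \<in> nbhd I (B + 1) b" "uu q \<in> nbhd I (B + 1) b" using nb_mono[of B "B + 1"] by auto
        then have "(phi p (uu p), phi p (uu q)) \<in> rl I r" using lcpD4[OF b(1)] cd(1) cu du by blast
        then show ?thesis unfolding f_def using up uq \<open>phi q = phi p\<close> by simp
      next
        case uq: False
        have "phi p d = fc q \<and> (\<forall>r. (uu p, d) \<in> rl I r \<longrightarrow> (phi p (uu p), phi p d) \<in> rl I r)"
          using mixed[OF pd up qd uq dg _ a0pq] dn cu by blast
        then show ?thesis unfolding f_def using up uq cd(1) cu by auto
      qed
    next
      case up: False
      show ?thesis
      proof (cases "unc q")
        case uq: True
        have du: "d = uu q" by (rule unc_single[OF qd uq dg])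
        have "phi q c = fc p \<and> (\<forall>r. (c, uu q) \<in> rl I r \<longrightarrow> (phi q c, phi q (uu q)) \<in> rl I r)"
          using mixed[OF qd uq pd up cg _ a0pq[symmetric]] cn' du by blast
        then show ?thesis unfolding f_def using up uq cd(1) du by auto
      next
        case uq: False
        obtain \<psi> where psi: "lcp I \<kappa> 1 c \<psi>" "\<psi> c = fc p"
          using Good_tr[OF pd _ _ cg, of "fc p" 1] fc_prop[OF pd] BK by auto
        have cself: "c \<in> nbhd I 1 c" by (rule nb_self[OF cdm])
        have e: "(\<psi> c, \<psi> d) \<in> rl I r" by (rule lcpD4[OF psi(1) cself dn cd(1)])
        have "\<psi> d \<in> nbhd I 1 (\<psi> c)" by (rule lcp_dist[OF wfI psi(1) dn _ cdm]) simp
        then have "\<psi> d \<in> nbhd I 1 (fc p)" using psi(2) by simp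
        then have "\<psi> d \<in> nbhd I (B + 1) (a0 p)" by (rule nb_trans[OF conjunct1[OF fc_prop[OF pd]]])
        then have dK: "\<psi> d \<in> nbhd I K (a0 q)" using nb_mono[of "B + 1" K] BK a0pq by auto
        have fK: "fc q \<in> nbhd I K (a0 q)" by (rule nb_mono[OF BK' conjunct1[OF fc_prop[OF qd]]])
        have c1: "\<kappa> (\<psi> d) = \<kappa> d" by (rule lcpD2[OF psi(1) dn])
        have c2: "\<kappa> (fc q) = \<kappa> d" using Good_col[OF qd _ dg] fc_prop[OF qd] by blast
        have c3: "\<kappa> d \<noteq> None" using col_all[OF qd uq dg] .
        have eq: "\<psi> d = fc q" by (rule sparse_eq[OF a0_dm[OF qd] dK fK]) (use c1 c2 c3 in auto)
        show ?thesis unfolding f_def using up uq e eq psi(2) by simp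
      qed
    qed
  qed
  have "is_hom Q I f" unfolding is_hom_def using fdm fcn frl wfQ by blast
  then show ?thesis by blast
qed
end


lemma paths_bound:
  fixes S :: "'q set" and E :: "('q \<times> 'q) set"
  assumes fin: "finite S" and ES: "E \<subseteq> S \<times> S" and x: "x \<in> S" and y: "y \<in> S" and xy: "(x, y) \<in> E\<^sup>*"
  shows "\<exists>n \<le> (if card S \<le> 1 then 0 else card S ^ 2). (x, y) \<in> E ^^ n"
proof (cases "card S \<le> 1")
  case True
  then have "x = y" using card_le_Suc0_iff_eq[OF fin] x y by auto
  then show ?thesis using True by (intro exI[of _ 0]) simp
next
  case False
  have finE: "finite E" using finite_subset[OF ES] fin by blast
  have cE: "card E \<le> card S ^ 2"
  proof -
    have "card E \<le> card (S \<times> S)" by (rule card_mono[OF _ ES]) (use fin in simp)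
    then show ?thesis by (simp add: card_cartesian_product power2_eq_square)
  qed
  from xy obtain n where "n \<le> card E" "(x, y) \<in> E ^^ n"
    using rtrancl_finite_eq_relpow[OF finE] by blast
  then show ?thesis using False cE by (intro exI[of _ n]) auto
qed

lemma bound_ok:
  fixes c k :: nat
  assumes "c \<le> k" "1 \<le> c"
  shows "2 * (if c \<le> 1 then 0 else c ^ 2) + 1 \<le> 2 * k ^ 3"
proof (cases "c \<le> 1")
  case True
  then have "1 \<le> k" using assms by simp
  then have "1 \<le> k ^ 3" by simp
  then show ?thesis using True by simp
next
  case False
  then have k2: "2 \<le> k" using assms by simp
  have a: "c ^ 2 \<le> k ^ 2" using assms(1) by (simp add: power_mono)
  have b: "2 * k ^ 2 \<le> k ^ 3"
  proof -
    have "2 * k ^ 2 \<le> k * k ^ 2" using k2 by (intro mult_right_mono) auto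
    then show ?thesis by (simp add: power3_eq_cube power2_eq_square)
  qed
  have d: "1 \<le> k ^ 2" using k2 by simp
  have "2 * c ^ 2 + 1 \<le> 2 * k ^ 3" using a b d by linarith
  then show ?thesis using False by simp
qed

theorem theorem6:
  fixes k :: nat and K :: nat
    and I :: "('d, 'c, 'r) interp" and \<kappa> :: "'d \<rightharpoonup> 'col"
    and Q :: "('q, 'c, 'r) interp"
  assumes "K = 2 * k ^ 3"
    and "wf_interp I" and "dom \<kappa> \<subseteq> dm I"
    and "sparse I \<kappa> K"
    and "wf_interp Q" and "finite (dm Q)" and "card (dm Q) \<le> k"
  shows "(\<exists>h. is_hom Q I h) \<longleftrightarrow> (\<exists>h. is_hom Q (quot I (simk I \<kappa> K)) h)"
proof -
  interpret setting I \<kappa> K using assms(2,4) by unfold_locales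
  show ?thesis
  proof
    assume "\<exists>h. is_hom Q I h"
    then obtain h where h: "is_hom Q I h" by blast
    have "is_hom Q (quot I R) (\<lambda>q. R `` {h q})"
      unfolding is_hom_def
    proof (intro conjI allI impI)
      show "(\<lambda>q. R `` {h q}) ` dm Q \<subseteq> dm (quot I R)"
        using h unfolding is_hom_def quot_def by (auto intro: quotientI)
    next
      fix A x assume "x \<in> cn Q A"
      then have "h x \<in> cn I A" using h unfolding is_hom_def by blast
      then show "R `` {h x} \<in> cn (quot I R) A" unfolding quot_def by auto
    next
      fix r x y assume "(x, y) \<in> rl Q r"
      then have "(h x, h y) \<in> rl I r" using h unfolding is_hom_def by blast
      then show "(R `` {h x}, R `` {h y}) \<in> rl (quot I R) r" unfolding quot_def by auto
    qed
    then show "\<exists>h. is_hom Q (quot I R) h" by blast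
  next
    assume "\<exists>h. is_hom Q (quot I R) h"
    then obtain g where g: "is_hom Q (quot I R) g" by blast
    show "\<exists>h. is_hom Q I h"
    proof (cases "dm Q = {}")
      case True
      have "is_hom Q I (\<lambda>_. undefined)"
        using assms(5) True unfolding is_hom_def wf_interp_def by blast
      then show ?thesis by blast
    next
      case False
      then have c1: "1 \<le> card (dm Q)" using assms(6) by (simp add: Suc_le_eq card_gt_0_iff)
      show ?thesis
      proof (rule backward[OF assms(5) g])
        show "2 * (if card (dm Q) \<le> 1 then 0 else card (dm Q) ^ 2) + 1 \<le> K"
          using bound_ok[OF assms(7) c1] assms(1) by simp
      next
        fix E x y
        assume "E \<subseteq> dm Q \<times> dm Q" "x \<in> dm Q" "y \<in> dm Q" "(x, y) \<in> E\<^sup>*"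
        then show "\<exists>n \<le> (if card (dm Q) \<le> 1 then 0 else card (dm Q) ^ 2). (x, y) \<in> E ^^ n"
          by (rule paths_bound[OF assms(6)])
      qed
    qed
  qed
qed

end
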